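(* Let $B=(T,D,\lambda)$ be an upwards closed quasi-bush containing no coat hangers and let $w\in V(T)$. Then every node $v\in\mathrm{OUT}(w,B)$ with $v\neq w$ is a child of $w$ in $T$.
   Context: A quasi-bush $B=(T,D,\lambda)$: a rooted tree $T$, a set $D$ of pointers from leaves of $T$ to nodes of $T$ (every leaf points to the root), and $\lambda\colon D\to\{0,1\}$. $v\le_T w$ means $v$ is an ancestor of $w$ (including $v=w$); $T(a)$ is the subtree of descendants of $a$. $G(B)$ is the directed graph on the leaves of $T$ where, for distinct leaves $u,v$ and $w$ the lowest ancestor of $v$ with $(u,w)\in D$, $(u,v)$ is an arc iff $\lambda((u,w))=1$; this $w$ is the connection point of $(u,v)$. $B$ is upwards closed if $(u,w)\in D$ and $w'\le_T w$ imply $(u,w')\in D$. A coat hanger is a subtree $T(a)$ such that $a$ is not the root, $a$ is not a leaf, and there is a leaf $v$ with $(v,p)\in D$, $\lambda((v,p))=1$ for the parent $p$ of $a$, and $v$ has no pointer to any node of $T(a)$. $\mathrm{OUT}(w,B)$ is the set of all $v$ such that $w$ is the connection point of some arc $(u,v)$ of $G(B)$. *)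

theory Defs
  imports Main
begin

definition rooted_tree :: "'a set \<Rightarrow> 'a \<Rightarrow> ('a \<Rightarrow> 'a) \<Rightarrow> bool" where
  "rooted_tree V r par \<longleftrightarrow> finite V \<and> r \<in> V \<and> par r = r \<and>
     (\<forall>v\<in>V. v \<noteq> r \<longrightarrow> par v \<in> V \<and> (\<exists>n. (par ^^ n) v = r))"

text \<open>anc V par v w: v is an ancestor of w (v \<le>_T w), including v = w.\<close>
definition anc :: "'a set \<Rightarrow> ('a \<Rightarrow> 'a) \<Rightarrow> 'a \<Rightarrow> 'a \<Rightarrow> bool" where
  "anc V par v w \<longleftrightarrow> w \<in> V \<and> (\<exists>n. (par ^^ n) w = v)"

definition is_child :: "'a set \<Rightarrow> 'a \<Rightarrow> ('a \<Rightarrow> 'a) \<Rightarrow> 'a \<Rightarrow> 'a \<Rightarrow> bool" where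
  "is_child V r par c w \<longleftrightarrow> c \<in> V \<and> c \<noteq> r \<and> par c = w"

definition is_leaf :: "'a set \<Rightarrow> 'a \<Rightarrow> ('a \<Rightarrow> 'a) \<Rightarrow> 'a \<Rightarrow> bool" where
  "is_leaf V r par v \<longleftrightarrow> v \<in> V \<and> \<not> (\<exists>c. is_child V r par c v)"

definition subtree :: "'a set \<Rightarrow> ('a \<Rightarrow> 'a) \<Rightarrow> 'a \<Rightarrow> 'a set" where
  "subtree V par a = {x. anc V par a x}"

text \<open>Quasi-bush (T, D, lambda): labels 0/1 are encoded as False/True.\<close>
definition quasi_bush :: "'a set \<Rightarrow> 'a \<Rightarrow> ('a \<Rightarrow> 'a) \<Rightarrow> ('a \<times> 'a) set \<Rightarrow> ('a \<times> 'a \<Rightarrow> bool) \<Rightarrow> bool" where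
  "quasi_bush V r par D lam \<longleftrightarrow> rooted_tree V r par \<and>
     (\<forall>(u, w)\<in>D. is_leaf V r par u \<and> w \<in> V) \<and>
     (\<forall>u. is_leaf V r par u \<longrightarrow> (u, r) \<in> D)"

definition conn_point :: "'a set \<Rightarrow> 'a \<Rightarrow> ('a \<Rightarrow> 'a) \<Rightarrow> ('a \<times> 'a) set \<Rightarrow> 'a \<Rightarrow> 'a \<Rightarrow> 'a \<Rightarrow> bool" where
  "conn_point V r par D u v w \<longleftrightarrow> anc V par w v \<and> (u, w) \<in> D \<and>
     (\<forall>w'. anc V par w' v \<and> (u, w') \<in> D \<longrightarrow> anc V par w' w)"

definition arc :: "'a set \<Rightarrow> 'a \<Rightarrow> ('a \<Rightarrow> 'a) \<Rightarrow> ('a \<times> 'a) set \<Rightarrow> ('a \<times> 'a \<Rightarrow> bool) \<Rightarrow> 'a \<Rightarrow> 'a \<Rightarrow> bool" where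
  "arc V r par D lam u v \<longleftrightarrow> is_leaf V r par u \<and> is_leaf V r par v \<and> u \<noteq> v \<and>
     (\<exists>w. conn_point V r par D u v w \<and> lam (u, w))"

definition upwards_closed :: "'a set \<Rightarrow> ('a \<Rightarrow> 'a) \<Rightarrow> ('a \<times> 'a) set \<Rightarrow> bool" where
  "upwards_closed V par D \<longleftrightarrow> (\<forall>u w w'. (u, w) \<in> D \<and> anc V par w' w \<longrightarrow> (u, w') \<in> D)"

definition coat_hanger :: "'a set \<Rightarrow> 'a \<Rightarrow> ('a \<Rightarrow> 'a) \<Rightarrow> ('a \<times> 'a) set \<Rightarrow> ('a \<times> 'a \<Rightarrow> bool) \<Rightarrow> 'a \<Rightarrow> bool" where
  "coat_hanger V r par D lam a \<longleftrightarrow> a \<in> V \<and> a \<noteq> r \<and> \<not> is_leaf V r par a \<and>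
     (\<exists>v. is_leaf V r par v \<and> (v, par a) \<in> D \<and> lam (v, par a) \<and>
          (\<forall>x\<in>subtree V par a. (v, x) \<notin> D))"

definition OUT :: "'a set \<Rightarrow> 'a \<Rightarrow> ('a \<Rightarrow> 'a) \<Rightarrow> ('a \<times> 'a) set \<Rightarrow> ('a \<times> 'a \<Rightarrow> bool) \<Rightarrow> 'a \<Rightarrow> 'a set" where
  "OUT V r par D lam w = {v. \<exists>u. arc V r par D lam u v \<and> conn_point V r par D u v w}"

end

theory Submission
  imports Defs
begin

lemma fix_pow: "par r = r \<Longrightarrow> (par ^^ j) r = r"
  by (induction j) auto

lemma pow_closed: "rooted_tree V r par \<Longrightarrow> x \<in> V \<Longrightarrow> (par ^^ n) x \<in> V"
  by (induction n) (auto simp: rooted_tree_def)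

lemma periodic_mult: "(par ^^ k) x = x \<Longrightarrow> (par ^^ (k * m)) x = x"
proof (induction m)
  case 0 then show ?case by simp
next
  case (Suc m)
  have "(par ^^ (k * Suc m)) x = (par ^^ (k * m)) ((par ^^ k) x)"
  proof -
    have "k * Suc m = k * m + k" by simp
    then show ?thesis by (simp only: funpow_add comp_apply)
  qed
  with Suc show ?case by simp
qed

lemma periodic_root:
  assumes "rooted_tree V r par" "x \<in> V" "k > 0" "(par ^^ k) x = x"
  shows "x = r"
proof (rule ccontr)
  assume xr: "x \<noteq> r"
  have "\<exists>N. (par ^^ N) x = r" using assms(1,2) xr unfolding rooted_tree_def by simp
  then obtain N where N: "(par ^^ N) x = r" by (elim exE)
  have pr: "par r = r" using assms(1) unfolding rooted_tree_def by simp
  define d where "d = k * N - N"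
  have d: "k * N = d + N" unfolding d_def using assms(3) by simp
  have e1: "(par ^^ (k * N)) x = x" by (rule periodic_mult[OF assms(4)])
  have "(par ^^ (d + N)) x = (par ^^ d) ((par ^^ N) x)" by (simp only: funpow_add comp_apply)
  also have "\<dots> = r" by (simp only: N fix_pow[of par r, OF pr])
  finally have "(par ^^ (k * N)) x = r" by (simp only: d)
  with e1 xr show False by simp
qed

theorem lemma7p31:
  assumes "quasi_bush V r par D lam"
    and "upwards_closed V par D"
    and "\<not> (\<exists>a. coat_hanger V r par D lam a)"
    and "w \<in> V"
    and "v \<in> OUT V r par D lam w"
    and "v \<noteq> w"
  shows "is_child V r par v w"
proof -
  have rt: "rooted_tree V r par" using assms(1) unfolding quasi_bush_def by blast
  have pr: "par r = r" using rt unfolding rooted_tree_def by blast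
  obtain u where arc: "arc V r par D lam u v" and cp: "conn_point V r par D u v w"
    using assms(5) unfolding OUT_def by blast
  have uleaf: "is_leaf V r par u" and vleaf: "is_leaf V r par v" using arc unfolding arc_def by auto
  have vV: "v \<in> V" using vleaf unfolding is_leaf_def by blast
  have uwD: "(u, w) \<in> D" using cp unfolding conn_point_def by blast
  have lamw: "lam (u, w)"
  proof -
    obtain w' where "conn_point V r par D u v w'" "lam (u, w')" using arc unfolding arc_def by blast
    moreover have "w' = w"
    proof -
      have a1: "anc V par w' w" using cp \<open>conn_point V r par D u v w'\<close> unfolding conn_point_def by blast
      have a2: "anc V par w w'" using cp \<open>conn_point V r par D u v w'\<close> unfolding conn_point_def by blast
      obtain p where p: "(par ^^ p) w = w'" using a1 unfolding anc_def by blast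
      obtain q where q: "(par ^^ q) w' = w" using a2 unfolding anc_def by blast
      have "(par ^^ (q + p)) w = (par ^^ q) ((par ^^ p) w)" by (simp only: funpow_add comp_apply)
      then have "(par ^^ (q + p)) w = w" by (simp only: p q)
      show ?thesis
      proof (cases "q + p = 0")
        case True then show ?thesis using p by simp
      next
        case False
        then have "q + p > 0" by simp
        then show ?thesis using periodic_root[OF rt assms(4) _ \<open>(par ^^ (q + p)) w = w\<close>] p fix_pow[of par r, OF pr] by simp
      qed
    qed
    ultimately show ?thesis by simp
  qed
  have "\<exists>n. (par ^^ n) v = w" using cp unfolding conn_point_def anc_def by blast
  define n where "n = (LEAST n. (par ^^ n) v = w)"
  have nw: "(par ^^ n) v = w" unfolding n_def by (rule LeastI_ex) fact
  have nmin: "\<And>m. m < n \<Longrightarrow> (par ^^ m) v \<noteq> w" unfolding n_def using not_less_Least by blast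
  have "n \<noteq> 0" using nw assms(6) by (cases n) auto
  have vr: "v \<noteq> r"
  proof
    assume "v = r" then have "w = r" using nw fix_pow[of par r, OF pr] by simp
    then show False using \<open>v = r\<close> assms(6) by simp
  qed
  show ?thesis
  proof (cases "n = 1")
    case True then show ?thesis using nw vV vr unfolding is_child_def by simp
  next
    case False
    define m where "m = n - 2"
    have m: "n = Suc (Suc m)" using \<open>n \<noteq> 0\<close> False unfolding m_def by simp
    define a where "a = (par ^^ Suc m) v"
    define c where "c = (par ^^ m) v"
    have paw: "par a = w" using nw m unfolding a_def by simp
    have aw: "a \<noteq> w" using nmin[of "Suc m"] m unfolding a_def by simp
    have ar: "a \<noteq> r" using paw aw pr by auto
    have aV: "a \<in> V" unfolding a_def using pow_closed[OF rt vV] .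
    have cV: "c \<in> V" unfolding c_def using pow_closed[OF rt vV] .
    have pca: "par c = a" unfolding a_def c_def by simp
    have cr: "c \<noteq> r" using pca ar pr by auto
    have anotleaf: "\<not> is_leaf V r par a"
      using cV cr pca unfolding is_leaf_def is_child_def by blast
    have ancav: "anc V par a v" unfolding anc_def a_def using vV by blast
    have "coat_hanger V r par D lam a"
      unfolding coat_hanger_def
    proof (intro conjI exI[of _ u])
      show "a \<in> V" "a \<noteq> r" "\<not> is_leaf V r par a" by fact+
      show "is_leaf V r par u" by fact
      show "(u, par a) \<in> D" "lam (u, par a)" using paw uwD lamw by auto
      show "\<forall>x\<in>subtree V par a. (u, x) \<notin> D"
      proof (intro ballI notI)
        fix x assume xs: "x \<in> subtree V par a" and uxD: "(u, x) \<in> D"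
        have "(u, a) \<in> D" using assms(2) xs uxD unfolding upwards_closed_def subtree_def by blast
        then have "anc V par a w" using cp ancav unfolding conn_point_def by blast
        then obtain q where q: "(par ^^ q) w = a" unfolding anc_def by blast
        have "(par ^^ Suc q) a = (par ^^ q) (par a)" by (simp only: funpow_Suc_right comp_apply)
        then have "(par ^^ Suc q) a = a" by (simp only: q paw)
        then have "a = r" using periodic_root[OF rt aV, of "Suc q"] by simp
        then show False using ar by simp
      qed
    qed
    then show ?thesis using assms(3) by blast
  qed
qed

end
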